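(* Under the standing assumptions, assume $n\le m$ and that all kept singular values $S_{kk}$ are strictly positive. Set $\widetilde{dU}_2:=(\mathbb{1}_n-UU^\dagger)dU$ and $\widetilde{dV}_2:=(\mathbb{1}_m-VV^\dagger)dV$. Then $dU=U(U^\dagger dU)+\widetilde{dU}_2$, $dV=V(V^\dagger dV)+\widetilde{dV}_2$, the matrix $\widetilde{dU}_2$ satisfies the Sylvester equation $$\widetilde{dU}_2\,S^2-AA^\dagger\,\widetilde{dU}_2=(\mathbb{1}_n-UU^\dagger)\,dA\,V S+A(\mathbb{1}_m-VV^\dagger)\,dA^\dagger U,$$ and $$\widetilde{dV}_2=(\mathbb{1}_m-VV^\dagger)\,dA^\dagger U S^{-1}+A^\dagger\,\widetilde{dU}_2\,S^{-1}.$$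
   Context: Let $n,m\ge1$, $r=\min(n,m)$ and $1\le t<r$. Let $\tau\mapsto A(\tau)\in\mathbb{C}^{n\times m}$ be differentiable, and suppose there are differentiable maps $\tau\mapsto U\in\mathbb{C}^{n\times t}$, $S\in\mathbb{R}^{t\times t}$, $V\in\mathbb{C}^{m\times t}$, $U_\perp\in\mathbb{C}^{n\times(r-t)}$, $S_\perp\in\mathbb{R}^{(r-t)\times(r-t)}$, $V_\perp\in\mathbb{C}^{m\times(r-t)}$ such that for every $\tau$: $A=USV^\dagger+U_\perp S_\perp V_\perp^\dagger$ is a (thin) singular value decomposition, i.e. $S,S_\perp$ are diagonal with nonnegative entries, $(U\,|\,U_\perp)$ and $(V\,|\,V_\perp)$ have orthonormal columns. Here $d$ denotes the derivative with respect to $\tau$, $^\dagger$ the conjugate transpose, $\mathbb{1}_k$ the $k\times k$ identity. (The formulas involve only $A,dA,U,S,V$, not $U_\perp,S_\perp,V_\perp$.) *)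

theory Defs
  imports "Jordan_Normal_Form.Schur_Decomposition"
begin

definition mat_has_deriv ::
  "(real \<Rightarrow> 'a::real_normed_vector mat) \<Rightarrow> 'a mat \<Rightarrow> real \<Rightarrow> bool" where
  "mat_has_deriv F D t \<longleftrightarrow>
     dim_row D = dim_row (F t) \<and> dim_col D = dim_col (F t) \<and>
     (\<forall>i<dim_row (F t). \<forall>j<dim_col (F t).
        ((\<lambda>s. F s $$ (i,j)) has_vector_derivative D $$ (i,j)) (at t))"

definition mat_differentiable ::
  "(real \<Rightarrow> 'a::real_normed_vector mat) \<Rightarrow> real \<Rightarrow> bool" where
  "mat_differentiable F t \<longleftrightarrow> (\<exists>D. mat_has_deriv F D t)"

definition cmat :: "real mat \<Rightarrow> complex mat" where
  "cmat S = map_mat complex_of_real S"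

definition nonneg_diag :: "real mat \<Rightarrow> bool" where
  "nonneg_diag S \<longleftrightarrow> diagonal_mat S \<and> (\<forall>k<dim_row S. S $$ (k,k) \<ge> 0)"

definition hcat :: "'a mat \<Rightarrow> 'a mat \<Rightarrow> 'a mat" where
  "hcat X Y = mat (dim_row X) (dim_col X + dim_col Y)
     (\<lambda>(i,j). if j < dim_col X then X $$ (i,j) else Y $$ (i, j - dim_col X))"

definition orthonormal_cols :: "complex mat \<Rightarrow> bool" where
  "orthonormal_cols M \<longleftrightarrow> mat_adjoint M * M = 1\<^sub>m (dim_col M)"

end

theory Submission
  imports Defs
begin

lemma adj_dim[simp]: "dim_row (mat_adjoint M) = dim_col M" "dim_col (mat_adjoint M) = dim_row M"
  by (auto simp: mat_adjoint_def)

lemma adj_idx[simp]: "i < dim_col M \<Longrightarrow> j < dim_row M \<Longrightarrow> mat_adjoint (M::complex mat) $$ (i,j) = cnj (M $$ (j,i))"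
  by (simp add: mat_adjoint_def mat_of_rows_def)

lemma adj_carrier[intro]: "M \<in> carrier_mat n m \<Longrightarrow> mat_adjoint M \<in> carrier_mat m n"
  by auto

lemma adj_mult: fixes A B :: "complex mat"
  assumes "A \<in> carrier_mat n k" "B \<in> carrier_mat k p"
  shows "mat_adjoint (A * B) = mat_adjoint B * mat_adjoint A"
  using assms by (intro eq_matI) (auto simp: scalar_prod_def cnj_sum mult.commute)

lemma adj_add: fixes A B :: "complex mat"
  assumes "A \<in> carrier_mat n k" "B \<in> carrier_mat n k"
  shows "mat_adjoint (A + B) = mat_adjoint A + mat_adjoint B"
  using assms by (intro eq_matI) auto

lemma adj_adj: fixes A :: "complex mat" shows "mat_adjoint (mat_adjoint A) = A"
  by (intro eq_matI) auto

lemma adj_cmat: assumes "diagonal_mat S" "S \<in> carrier_mat t t"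
  shows "mat_adjoint (cmat S) = cmat S"
proof (intro eq_matI)
  fix i j assume "i < dim_row (cmat S)" "j < dim_col (cmat S)"
  then show "mat_adjoint (cmat S) $$ (i, j) = cmat S $$ (i, j)"
    using assms by (cases "i = j") (auto simp: cmat_def diagonal_mat_def)
qed (use assms in \<open>auto simp: cmat_def\<close>)

lemma vd_unique: "(f has_vector_derivative a) (at x) \<Longrightarrow> (f has_vector_derivative b) (at x) \<Longrightarrow> a = b"
  unfolding has_vector_derivative_def
  by (drule (1) has_derivative_unique) (metis scaleR_one)

lemma mat_has_deriv_unique: "mat_has_deriv F D1 t \<Longrightarrow> mat_has_deriv F D2 t \<Longrightarrow> D1 = D2"
  unfolding mat_has_deriv_def
  by (intro eq_matI) (simp_all, metis vd_unique)

lemma mat_has_deriv_carrier: "mat_has_deriv F D t \<Longrightarrow> F t \<in> carrier_mat a b \<Longrightarrow> D \<in> carrier_mat a b"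
  unfolding mat_has_deriv_def carrier_mat_def by simp

lemma mat_has_deriv_mult: fixes F G :: "real \<Rightarrow> complex mat"
  assumes "\<And>s. F s \<in> carrier_mat n k" "\<And>s. G s \<in> carrier_mat k p"
   "mat_has_deriv F DF t" "mat_has_deriv G DG t"
  shows "mat_has_deriv (\<lambda>s. F s * G s) (DF * G t + F t * DG) t"
proof -
  have dF: "\<And>i j. i < n \<Longrightarrow> j < k \<Longrightarrow> ((\<lambda>s. F s $$ (i,j)) has_vector_derivative DF $$ (i,j)) (at t)"
    and dG: "\<And>i j. i < k \<Longrightarrow> j < p \<Longrightarrow> ((\<lambda>s. G s $$ (i,j)) has_vector_derivative DG $$ (i,j)) (at t)"
    and cF: "DF \<in> carrier_mat n k" and cG: "DG \<in> carrier_mat k p"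
    using assms unfolding mat_has_deriv_def by (metis carrier_matD carrier_matI)+
  show ?thesis unfolding mat_has_deriv_def
  proof (intro conjI allI impI)
    fix i j assume i: "i < dim_row (F t * G t)" and j: "j < dim_col (F t * G t)"
    then have i': "i < n" and j': "j < p" using assms(1)[of t] assms(2)[of t] by auto
    have e: "(F s * G s) $$ (i,j) = (\<Sum>l\<in>{0..<k}. F s $$ (i,l) * G s $$ (l,j))" for s
      using assms(1)[of s] assms(2)[of s] i' j' by (auto simp: scalar_prod_def intro!: sum.cong)
    have e2: "(DF * G t + F t * DG) $$ (i,j) = (\<Sum>l\<in>{0..<k}. F t $$ (i,l) * DG $$ (l,j) + DF $$ (i,l) * G t $$ (l,j))"
    proof -
      have G: "G t \<in> carrier_mat k p" "F t \<in> carrier_mat n k" using assms by auto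
      have 1: "(DF * G t) $$ (i,j) = (\<Sum>l\<in>{0..<k}. DF $$ (i,l) * G t $$ (l,j))"
        using G cF i' j' by (auto simp: scalar_prod_def intro!: sum.cong)
      have 2: "(F t * DG) $$ (i,j) = (\<Sum>l\<in>{0..<k}. F t $$ (i,l) * DG $$ (l,j))"
        using G cG i' j' by (auto simp: scalar_prod_def intro!: sum.cong)
      have "(DF * G t + F t * DG) $$ (i,j) = (DF * G t) $$ (i,j) + (F t * DG) $$ (i,j)"
        using G cF cG i' j' by simp
      then show ?thesis unfolding 1 2 by (simp add: sum.distrib add.commute)
    qed
    show "((\<lambda>s. (F s * G s) $$ (i, j)) has_vector_derivative (DF * G t + F t * DG) $$ (i, j)) (at t)"
      unfolding e e2
      by (intro has_vector_derivative_sum has_vector_derivative_mult dF dG) (auto simp: i' j')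
  qed (use assms(1)[of t] assms(2)[of t] cF cG in auto)
qed

lemma mat_has_deriv_adj: fixes F :: "real \<Rightarrow> complex mat"
  assumes "mat_has_deriv F D t" "\<And>s. F s \<in> carrier_mat a b"
  shows "mat_has_deriv (\<lambda>s. mat_adjoint (F s)) (mat_adjoint D) t"
proof -
  have c: "D \<in> carrier_mat a b" "F t \<in> carrier_mat a b" using assms unfolding mat_has_deriv_def
    by (metis carrier_matD carrier_matI)+
  show ?thesis unfolding mat_has_deriv_def
  proof (intro conjI allI impI)
    fix i j assume "i < dim_row (mat_adjoint (F t))" "j < dim_col (mat_adjoint (F t))"
    then have ij: "i < b" "j < a" using c by auto
    have e: "mat_adjoint (F s) $$ (i,j) = cnj (F s $$ (j,i))" for s
      using assms(2)[of s] ij by auto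
    show "((\<lambda>s. mat_adjoint (F s) $$ (i, j)) has_vector_derivative mat_adjoint D $$ (i, j)) (at t)"
      unfolding e using c ij assms(1) unfolding mat_has_deriv_def
      by (auto intro!: has_vector_derivative_cnj)
  qed (use c in auto)
qed

lemma mat_has_deriv_cmat: 
  assumes "\<And>s. S s \<in> carrier_mat a b" "mat_differentiable S t"
  shows "\<exists>D. mat_has_deriv (\<lambda>s. cmat (S s)) D t"
proof -
  obtain D where D: "mat_has_deriv S D t" using assms unfolding mat_differentiable_def by auto
  have "mat_has_deriv (\<lambda>s. cmat (S s)) (cmat D) t"
    unfolding mat_has_deriv_def
  proof (intro conjI allI impI)
    have c: "D \<in> carrier_mat a b" "S t \<in> carrier_mat a b" using assms D unfolding mat_has_deriv_def
      by (metis carrier_matD carrier_matI)+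
    fix i j assume "i < dim_row (cmat (S t))" "j < dim_col (cmat (S t))"
    then have ij: "i < a" "j < b" using c by (auto simp: cmat_def)
    have e: "cmat (S s) $$ (i,j) = of_real (S s $$ (i,j))" for s
      using assms(1)[of s] ij by (auto simp: cmat_def)
    show "((\<lambda>s. cmat (S s) $$ (i, j)) has_vector_derivative cmat D $$ (i, j)) (at t)"
      unfolding e using c ij D unfolding mat_has_deriv_def
      by (auto simp: cmat_def has_real_derivative_iff_has_vector_derivative intro!: has_vector_derivative_of_real)
  qed (use D in \<open>auto simp: cmat_def mat_has_deriv_def\<close>)
  then show ?thesis by blast
qed

lemma mat_cancel1: fixes X Y Z :: "complex mat"
  assumes "X \<in> carrier_mat p q" "Y \<in> carrier_mat p q" "Z \<in> carrier_mat p q"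
  shows "X + Y + Z - Z = X + Y"
  using assms by (intro eq_matI) auto

lemma mat_cancel1': fixes X Y Z :: "complex mat"
  assumes "X \<in> carrier_mat p q" "Y \<in> carrier_mat p q" "Z \<in> carrier_mat p q"
  shows "X + (Y + Z) - Z = X + Y"
  using assms by (intro eq_matI) auto

lemma mat_cancel2: fixes X Y :: "complex mat"
  assumes "X \<in> carrier_mat p q" "Y \<in> carrier_mat p q"
  shows "X + (Y - X) = Y"
  using assms by (intro eq_matI) auto

lemma mat_cancel3: fixes X Y :: "complex mat"
  assumes "X \<in> carrier_mat p q" "Y \<in> carrier_mat p q"
  shows "X - (X - Y) = Y" "X - X = 0\<^sub>m p q" "X + 0\<^sub>m p q = X" "X - 0\<^sub>m p q = X"
  using assms by (auto intro!: eq_matI)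

lemma algebra_core:
  fixes a da u du v dv Sc dS Sinv :: "complex mat"
  assumes c: "a \<in> carrier_mat n m" "da \<in> carrier_mat n m" "u \<in> carrier_mat n t" "du \<in> carrier_mat n t"
    "v \<in> carrier_mat m t" "dv \<in> carrier_mat m t" "Sc \<in> carrier_mat t t" "dS \<in> carrier_mat t t"
    "Sinv \<in> carrier_mat t t"
  and uu: "mat_adjoint u * u = 1\<^sub>m t" and vv: "mat_adjoint v * v = 1\<^sub>m t"
  and av: "a * v = u * Sc" and au: "mat_adjoint a * u = v * Sc"
  and d1: "da * v + a * dv = du * Sc + u * dS"
  and d2: "mat_adjoint da * u + mat_adjoint a * du = dv * Sc + v * dS"
  and inv: "Sc * Sinv = 1\<^sub>m t" and sa: "mat_adjoint Sc = Sc"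
  shows "let dU2 = (1\<^sub>m n - u * mat_adjoint u) * du;
             dV2 = (1\<^sub>m m - v * mat_adjoint v) * dv
         in du = u * (mat_adjoint u * du) + dU2
          \<and> dv = v * (mat_adjoint v * dv) + dV2
          \<and> dU2 * (Sc * Sc) - a * mat_adjoint a * dU2
              = (1\<^sub>m n - u * mat_adjoint u) * da * v * Sc
                + a * (1\<^sub>m m - v * mat_adjoint v) * mat_adjoint da * u
          \<and> dV2 = (1\<^sub>m m - v * mat_adjoint v) * mat_adjoint da * u * Sinv
                + mat_adjoint a * dU2 * Sinv"
proof -
  define P where "P = 1\<^sub>m n - u * mat_adjoint u"
  define Q where "Q = 1\<^sub>m m - v * mat_adjoint v"
  have cP: "P \<in> carrier_mat n n" "Q \<in> carrier_mat m m" unfolding P_def Q_def using c by auto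
  have ca: "mat_adjoint a \<in> carrier_mat m n" "mat_adjoint da \<in> carrier_mat m n"
    "mat_adjoint u \<in> carrier_mat t n" "mat_adjoint v \<in> carrier_mat t m" using c by auto
  note cc = c cP ca
  have Pdu: "P * du = du - u * (mat_adjoint u * du)"
    unfolding P_def using cc by (simp add: minus_mult_distrib_mat[of _ n n] assoc_mult_mat[of u n t "mat_adjoint u" n du t])
  have Qdv: "Q * dv = dv - v * (mat_adjoint v * dv)"
    unfolding Q_def using cc by (simp add: minus_mult_distrib_mat[of _ m m] assoc_mult_mat[of v m t "mat_adjoint v" m dv t])
  have c1: "du = u * (mat_adjoint u * du) + P * du"
    unfolding Pdu by (rule sym, rule mat_cancel2) (use cc in \<open>auto intro!: mult_carrier_mat\<close>)
  have c2: "dv = v * (mat_adjoint v * dv) + Q * dv"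
    unfolding Qdv by (rule sym, rule mat_cancel2) (use cc in \<open>auto intro!: mult_carrier_mat\<close>)
  have Pu: "P * u = 0\<^sub>m n t"
    unfolding P_def using cc uu by (simp add: minus_mult_distrib_mat[of _ n n] mat_cancel3 assoc_mult_mat[of u n t "mat_adjoint u" n u t])
  have Qv: "Q * v = 0\<^sub>m m t"
    unfolding Q_def using cc vv by (simp add: minus_mult_distrib_mat[of _ m m] mat_cancel3 assoc_mult_mat[of v m t "mat_adjoint v" m v t])
  have ua: "mat_adjoint u * a = Sc * mat_adjoint v"
  proof -
    have "mat_adjoint u * a = mat_adjoint (mat_adjoint a * u)"
      using cc by (simp add: adj_mult[of _ m n] adj_adj)
    also have "\<dots> = Sc * mat_adjoint v" unfolding au using cc sa by (simp add: adj_mult[of _ m t])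
    finally show ?thesis .
  qed
  have va: "mat_adjoint v * mat_adjoint a = Sc * mat_adjoint u"
  proof -
    have "mat_adjoint v * mat_adjoint a = mat_adjoint (a * v)"
      using cc by (simp add: adj_mult[of _ n m])
    also have "\<dots> = Sc * mat_adjoint u" unfolding av using cc sa by (simp add: adj_mult[of _ n t])
    finally show ?thesis .
  qed
  have PA: "P * a = a * Q"
  proof -
    have "P * a = a - u * Sc * mat_adjoint v"
      unfolding P_def using cc by (simp add: minus_mult_distrib_mat[of _ n n] ua assoc_mult_mat[of u n t "mat_adjoint u" n a m] assoc_mult_mat[of u n t Sc t "mat_adjoint v" m])
    also have "\<dots> = a * Q"
    proof -
      have "a * (v * mat_adjoint v) = a * v * mat_adjoint v" using cc by simp
      then show ?thesis
      unfolding Q_def using cc by (simp add: mult_minus_distrib_mat[of a n m "1\<^sub>m m" m "v * mat_adjoint v"] av)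
    qed
    finally show ?thesis .
  qed
  have QA: "Q * mat_adjoint a = mat_adjoint a * P"
  proof -
    have "Q * mat_adjoint a = mat_adjoint a - v * Sc * mat_adjoint u"
      unfolding Q_def using cc by (simp add: minus_mult_distrib_mat[of _ m m] va assoc_mult_mat[of v m t "mat_adjoint v" m "mat_adjoint a" n] assoc_mult_mat[of v m t Sc t "mat_adjoint u" n])
    also have "\<dots> = mat_adjoint a * P"
    proof -
      have "mat_adjoint a * (u * mat_adjoint u) = mat_adjoint a * u * mat_adjoint u" using cc by simp
      then show ?thesis
      unfolding P_def using cc by (simp add: mult_minus_distrib_mat[of "mat_adjoint a" m n "1\<^sub>m n" n "u * mat_adjoint u"] au)
    qed
    finally show ?thesis .
  qed
  have m1: "P * du \<in> carrier_mat n t" "Q * dv \<in> carrier_mat m t" "P * da \<in> carrier_mat n m"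
    "Q * mat_adjoint da \<in> carrier_mat m n" "u * dS \<in> carrier_mat n t" "v * dS \<in> carrier_mat m t"
    "du * Sc \<in> carrier_mat n t" "dv * Sc \<in> carrier_mat m t" "da * v \<in> carrier_mat n t"
    "a * dv \<in> carrier_mat n t" "mat_adjoint da * u \<in> carrier_mat m t" "mat_adjoint a * du \<in> carrier_mat m t"
    "P * da * v \<in> carrier_mat n t" "Q * mat_adjoint da * u \<in> carrier_mat m t"
    "a * (Q * dv) \<in> carrier_mat n t" "mat_adjoint a * (P * du) \<in> carrier_mat m t"
    "a * Q \<in> carrier_mat n m" "mat_adjoint a * P \<in> carrier_mat m n"
    using cc by (auto intro!: mult_carrier_mat)
  note cc = cc m1
  have g: "P * du * Sc = P * da * v + a * (Q * dv)"
  proof -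
    have z: "P * (u * dS) = 0\<^sub>m n t"
    proof -
      have "P * u * dS = 0\<^sub>m n t" using cc by (simp add: Pu)
      then show ?thesis using cc by simp
    qed
    have "P * du * Sc = P * (du * Sc)" using cc by simp
    also have "\<dots> = P * (du * Sc) + P * (u * dS)" using cc z by (simp add: mat_cancel3)
    also have "\<dots> = P * (du * Sc + u * dS)" using cc by (simp add: mult_add_distrib_mat[OF cP(1) m1(7) m1(5)])
    also have "\<dots> = P * (da * v + a * dv)" by (simp add: d1)
    also have "\<dots> = P * (da * v) + P * (a * dv)" using cc by (simp add: mult_add_distrib_mat[OF cP(1) m1(9) m1(10)])
    also have "\<dots> = P * da * v + a * (Q * dv)"
    proof -
      have "P * a * dv = a * Q * dv" by (simp only: PA)
      then show ?thesis using cc by simp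
    qed
    finally show ?thesis .
  qed
  have h: "Q * dv * Sc = Q * mat_adjoint da * u + mat_adjoint a * (P * du)"
  proof -
    have z: "Q * (v * dS) = 0\<^sub>m m t"
    proof -
      have "Q * v * dS = 0\<^sub>m m t" using cc by (simp add: Qv)
      then show ?thesis using cc by simp
    qed
    have "Q * dv * Sc = Q * (dv * Sc)" using cc by simp
    also have "\<dots> = Q * (dv * Sc) + Q * (v * dS)" using cc z by (simp add: mat_cancel3)
    also have "\<dots> = Q * (dv * Sc + v * dS)" using cc by (simp add: mult_add_distrib_mat[OF cP(2) m1(8) m1(6)])
    also have "\<dots> = Q * (mat_adjoint da * u + mat_adjoint a * du)" by (simp add: d2)
    also have "\<dots> = Q * (mat_adjoint da * u) + Q * (mat_adjoint a * du)" using cc by (simp add: mult_add_distrib_mat[OF cP(2) m1(11) m1(12)])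
    also have "\<dots> = Q * mat_adjoint da * u + mat_adjoint a * (P * du)"
    proof -
      have "Q * mat_adjoint a * du = mat_adjoint a * P * du" by (simp only: QA)
      then show ?thesis using cc by simp
    qed
    finally show ?thesis .
  qed
  have c4: "Q * dv = Q * mat_adjoint da * u * Sinv + mat_adjoint a * (P * du) * Sinv"
  proof -
    have "Q * dv = Q * dv * (Sc * Sinv)" using cc by (simp add: inv)
    also have "\<dots> = (Q * dv * Sc) * Sinv" by (simp only: assoc_mult_mat[OF m1(2) c(7) c(9)])
    also have "\<dots> = Q * mat_adjoint da * u * Sinv + mat_adjoint a * (P * du) * Sinv"
      unfolding h by (rule add_mult_distrib_mat[OF m1(14) m1(16) c(9)])
    finally show ?thesis .
  qed
  have c3: "P * du * (Sc * Sc) - a * mat_adjoint a * (P * du)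
     = P * da * v * Sc + a * Q * mat_adjoint da * u"
  proof -
    have "P * du * (Sc * Sc) = (P * du * Sc) * Sc" by (simp only: assoc_mult_mat[OF m1(1) c(7) c(7)])
    also have "\<dots> = P * da * v * Sc + a * (Q * dv) * Sc"
      unfolding g by (rule add_mult_distrib_mat[OF m1(13) m1(15) c(7)])
    also have "a * (Q * dv) * Sc = a * (Q * dv * Sc)" by (simp only: assoc_mult_mat[OF c(1) m1(2) c(7)])
    also have "\<dots> = a * (Q * mat_adjoint da * u) + a * (mat_adjoint a * (P * du))"
      unfolding h by (rule mult_add_distrib_mat[OF c(1) m1(14) m1(16)])
    also have "a * (Q * mat_adjoint da * u) = a * Q * mat_adjoint da * u"
    proof -
      have q: "Q * mat_adjoint da \<in> carrier_mat m n" "a * (Q * mat_adjoint da) \<in> carrier_mat n n" using cc by (auto intro!: mult_carrier_mat)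
      show ?thesis by (simp only: assoc_mult_mat[OF c(1) q(1) c(3), symmetric] assoc_mult_mat[OF c(1) cP(2) ca(2)])
    qed
    also have "a * (mat_adjoint a * (P * du)) = a * mat_adjoint a * (P * du)" by (simp only: assoc_mult_mat[OF c(1) ca(1) m1(1)])
    finally have "P * du * (Sc * Sc) = P * da * v * Sc + (a * Q * mat_adjoint da * u + a * mat_adjoint a * (P * du))" .
    then have "P * du * (Sc * Sc) - a * mat_adjoint a * (P * du) = 
      P * da * v * Sc + (a * Q * mat_adjoint da * u + a * mat_adjoint a * (P * du)) - a * mat_adjoint a * (P * du)"
      by (simp only:)
    also have "\<dots> = P * da * v * Sc + a * Q * mat_adjoint da * u"
      by (rule mat_cancel1') (use cc in \<open>auto intro!: mult_carrier_mat\<close>)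
    finally show ?thesis .
  qed
  show ?thesis unfolding Let_def P_def[symmetric] Q_def[symmetric]
    using c1 c2 c3 c4 by simp
qed

lemma adjmult_idx: fixes X Y :: "complex mat"
  assumes "X \<in> carrier_mat n p" "Y \<in> carrier_mat n q" "i < p" "j < q"
  shows "(mat_adjoint X * Y) $$ (i,j) = (\<Sum>l\<in>{0..<n}. cnj (X $$ (l,i)) * Y $$ (l,j))"
  using assms by (auto simp: scalar_prod_def intro!: sum.cong)

lemma hcat_orth: fixes U W :: "complex mat"
  assumes U: "U \<in> carrier_mat n a" and W: "W \<in> carrier_mat n b"
    and o: "orthonormal_cols (hcat U W)"
  shows "mat_adjoint U * U = 1\<^sub>m a" "mat_adjoint W * U = 0\<^sub>m b a"
proof -
  let ?H = "hcat U W"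
  have H: "?H \<in> carrier_mat n (a + b)" using U W by (auto simp: hcat_def)
  have HH: "mat_adjoint ?H * ?H = 1\<^sub>m (a + b)" using o H unfolding orthonormal_cols_def by auto
  have Hl: "?H $$ (l, i) = U $$ (l, i)" if "l < n" "i < a" for l i
    using U W that by (auto simp: hcat_def)
  have Hr: "?H $$ (l, a + i) = W $$ (l, i)" if "l < n" "i < b" for l i
    using U W that by (auto simp: hcat_def)
  show "mat_adjoint U * U = 1\<^sub>m a"
  proof (rule eq_matI)
    fix i j assume ij: "i < dim_row (1\<^sub>m a :: complex mat)" "j < dim_col (1\<^sub>m a :: complex mat)"
    then have ij': "i < a" "j < a" by auto
    have "(mat_adjoint U * U) $$ (i,j) = (\<Sum>l\<in>{0..<n}. cnj (?H $$ (l,i)) * ?H $$ (l,j))"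
      using adjmult_idx[OF U U ij'] Hl ij' by simp
    also have "\<dots> = (mat_adjoint ?H * ?H) $$ (i,j)"
      using adjmult_idx[OF H H, of i j] ij' by simp
    also have "\<dots> = 1\<^sub>m a $$ (i,j)" unfolding HH using ij' by simp
    finally show "(mat_adjoint U * U) $$ (i,j) = 1\<^sub>m a $$ (i,j)" .
  qed (use U in auto)
  show "mat_adjoint W * U = 0\<^sub>m b a"
  proof (rule eq_matI)
    fix i j assume ij: "i < dim_row (0\<^sub>m b a :: complex mat)" "j < dim_col (0\<^sub>m b a :: complex mat)"
    then have ij': "i < b" "j < a" by auto
    have "(mat_adjoint W * U) $$ (i,j) = (\<Sum>l\<in>{0..<n}. cnj (?H $$ (l,a+i)) * ?H $$ (l,j))"
      using adjmult_idx[OF W U ij'] Hl Hr ij' by simp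
    also have "\<dots> = (mat_adjoint ?H * ?H) $$ (a+i,j)"
      using adjmult_idx[OF H H, of "a+i" j] ij' by simp
    also have "\<dots> = 0" unfolding HH using ij' by simp
    finally show "(mat_adjoint W * U) $$ (i,j) = 0\<^sub>m b a $$ (i,j)" using ij' by simp
  qed (use U W in auto)
qed

lemma svd_AV: fixes u sc v up sp vp :: "complex mat"
  assumes "u \<in> carrier_mat n t" "sc \<in> carrier_mat t t" "v \<in> carrier_mat m t"
    "up \<in> carrier_mat n k" "sp \<in> carrier_mat k k" "vp \<in> carrier_mat m k"
    "mat_adjoint v * v = 1\<^sub>m t" "mat_adjoint vp * v = 0\<^sub>m k t"
  shows "(u * sc * mat_adjoint v + up * sp * mat_adjoint vp) * v = u * sc"
proof -
  have c: "u * sc \<in> carrier_mat n t" "up * sp \<in> carrier_mat n k"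
    "mat_adjoint v \<in> carrier_mat t m" "mat_adjoint vp \<in> carrier_mat k m"
    using assms by (auto intro!: mult_carrier_mat)
  have c2: "u * sc * mat_adjoint v \<in> carrier_mat n m" "up * sp * mat_adjoint vp \<in> carrier_mat n m"
    using c by (auto intro!: mult_carrier_mat)
  have "(u * sc * mat_adjoint v + up * sp * mat_adjoint vp) * v
      = u * sc * mat_adjoint v * v + up * sp * mat_adjoint vp * v"
    by (rule add_mult_distrib_mat[OF c2 assms(3)])
  also have "u * sc * mat_adjoint v * v = u * sc"
    using assoc_mult_mat[OF c(1) c(3) assms(3)] assms(7) right_mult_one_mat[OF c(1)] by simp
  also have "up * sp * mat_adjoint vp * v = 0\<^sub>m n t"
    using assoc_mult_mat[OF c(2) c(4) assms(3)] assms(8) c(2) by (simp add: right_mult_zero_mat)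
  finally show ?thesis using c by simp
qed

lemma adj_svd: fixes u sc v :: "complex mat"
  assumes "u \<in> carrier_mat n t" "sc \<in> carrier_mat t t" "v \<in> carrier_mat m t" "mat_adjoint sc = sc"
  shows "mat_adjoint (u * sc * mat_adjoint v) = v * sc * mat_adjoint u"
proof -
  have c: "u * sc \<in> carrier_mat n t" "mat_adjoint v \<in> carrier_mat t m" using assms by (auto intro!: mult_carrier_mat)
  have "mat_adjoint (u * sc * mat_adjoint v) = v * mat_adjoint (u * sc)"
    using adj_mult[OF c] by (simp add: adj_adj)
  also have "\<dots> = v * (sc * mat_adjoint u)" using adj_mult[OF assms(1,2)] assms(4) by simp
  also have "\<dots> = v * sc * mat_adjoint u"
    using assoc_mult_mat[OF assms(3) assms(2) adj_carrier[OF assms(1)]] by simp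
  finally show ?thesis .
qed

lemma cmat_inv: fixes S :: "real mat"
  assumes S: "S \<in> carrier_mat t t" and d: "diagonal_mat S" and p: "\<And>k. k < t \<Longrightarrow> S $$ (k,k) > 0"
  shows "cmat S * the (mat_inverse (cmat S)) = 1\<^sub>m t \<and> the (mat_inverse (cmat S)) \<in> carrier_mat t t"
proof -
  have Sc: "cmat S \<in> carrier_mat t t" using S by (auto simp: cmat_def)
  have "det (cmat S) = prod_list (diag_mat (cmat S))"
    by (rule det_lower_triangular[OF _ Sc]) (use S d in \<open>auto simp: cmat_def diagonal_mat_def\<close>)
  also have "\<dots> \<noteq> 0"
    using S p by (auto simp: diag_mat_def cmat_def prod_list_zero_iff) (metis less_irrefl)
  finally have "det (cmat S) \<noteq> 0" .
  from det_non_zero_imp_unit[OF Sc this] have U: "cmat S \<in> Units (ring_mat TYPE(complex) t ())" .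
  obtain B where B: "mat_inverse (cmat S) = Some B"
    using mat_inverse(1)[OF Sc, of "()"] U by (cases "mat_inverse (cmat S)") auto
  show ?thesis using mat_inverse(2)[OF Sc B] B by simp
qed

theorem mainTheorem7:
  fixes n m r t :: nat
    and A U V Up Vp :: "real \<Rightarrow> complex mat"
    and S Sp :: "real \<Rightarrow> real mat"
    and dA dU dV :: "real \<Rightarrow> complex mat"
    and \<tau> :: real
  assumes "n \<ge> 1" "m \<ge> 1" "r = min n m" "1 \<le> t" "t < r"
    and dims: "\<And>s. A s \<in> carrier_mat n m" "\<And>s. U s \<in> carrier_mat n t"
      "\<And>s. S s \<in> carrier_mat t t" "\<And>s. V s \<in> carrier_mat m t"
      "\<And>s. Up s \<in> carrier_mat n (r - t)" "\<And>s. Sp s \<in> carrier_mat (r - t) (r - t)"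
      "\<And>s. Vp s \<in> carrier_mat m (r - t)"
    and svd: "\<And>s. A s = U s * cmat (S s) * mat_adjoint (V s)
                       + Up s * cmat (Sp s) * mat_adjoint (Vp s)"
      "\<And>s. nonneg_diag (S s)" "\<And>s. nonneg_diag (Sp s)"
      "\<And>s. orthonormal_cols (hcat (U s) (Up s))"
      "\<And>s. orthonormal_cols (hcat (V s) (Vp s))"
    and deriv: "\<And>s. mat_has_deriv A (dA s) s" "\<And>s. mat_has_deriv U (dU s) s"
      "\<And>s. mat_has_deriv V (dV s) s" "\<And>s. mat_differentiable S s"
      "\<And>s. mat_differentiable Up s" "\<And>s. mat_differentiable Sp s"
      "\<And>s. mat_differentiable Vp s"
    and nm: "n \<le> m"
    and pos: "\<And>k. k < t \<Longrightarrow> S \<tau> $$ (k,k) > 0"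
  shows "let dU2 = (1\<^sub>m n - U \<tau> * mat_adjoint (U \<tau>)) * dU \<tau>;
             dV2 = (1\<^sub>m m - V \<tau> * mat_adjoint (V \<tau>)) * dV \<tau>;
             Sc = cmat (S \<tau>);
             Sinv = the (mat_inverse Sc)
         in dU \<tau> = U \<tau> * (mat_adjoint (U \<tau>) * dU \<tau>) + dU2
          \<and> dV \<tau> = V \<tau> * (mat_adjoint (V \<tau>) * dV \<tau>) + dV2
          \<and> dU2 * (Sc * Sc) - A \<tau> * mat_adjoint (A \<tau>) * dU2
              = (1\<^sub>m n - U \<tau> * mat_adjoint (U \<tau>)) * dA \<tau> * V \<tau> * Sc
                + A \<tau> * (1\<^sub>m m - V \<tau> * mat_adjoint (V \<tau>)) * mat_adjoint (dA \<tau>) * U \<tau>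
          \<and> dV2 = (1\<^sub>m m - V \<tau> * mat_adjoint (V \<tau>)) * mat_adjoint (dA \<tau>) * U \<tau> * Sinv
                + mat_adjoint (A \<tau>) * dU2 * Sinv"
proof -
  have cSc: "\<And>s. cmat (S s) \<in> carrier_mat t t" using dims(3) by (auto simp: cmat_def)
  have cSp: "\<And>s. cmat (Sp s) \<in> carrier_mat (r - t) (r - t)" using dims(6) by (auto simp: cmat_def)
  have adjSc: "\<And>s. mat_adjoint (cmat (S s)) = cmat (S s)"
    using adj_cmat svd(2) dims(3) unfolding nonneg_diag_def by blast
  have adjSp: "\<And>s. mat_adjoint (cmat (Sp s)) = cmat (Sp s)"
    using adj_cmat svd(3) dims(6) unfolding nonneg_diag_def by blast
  note oU = hcat_orth[OF dims(2) dims(5) svd(4)]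
  note oV = hcat_orth[OF dims(4) dims(7) svd(5)]
  have F1: "A s * V s = U s * cmat (S s)" for s
    by (subst svd(1)) (rule svd_AV[OF dims(2) cSc dims(4) dims(5) cSp dims(7) oV])
  have adjA: "mat_adjoint (A s) = V s * cmat (S s) * mat_adjoint (U s) + Vp s * cmat (Sp s) * mat_adjoint (Up s)" for s
  proof -
    have c1: "U s * cmat (S s) * mat_adjoint (V s) \<in> carrier_mat n m"
      "Up s * cmat (Sp s) * mat_adjoint (Vp s) \<in> carrier_mat n m"
      by (rule mult_carrier_mat[OF mult_carrier_mat[OF dims(2) cSc] adj_carrier[OF dims(4)]],
          rule mult_carrier_mat[OF mult_carrier_mat[OF dims(5) cSp] adj_carrier[OF dims(7)]])
    show ?thesis
      by (subst svd(1), subst adj_add[OF c1], simp only: adj_svd[OF dims(2) cSc dims(4) adjSc] adj_svd[OF dims(5) cSp dims(7) adjSp])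
  qed
  have F2: "mat_adjoint (A s) * U s = V s * cmat (S s)" for s
    unfolding adjA by (rule svd_AV[OF dims(4) cSc dims(2) dims(7) cSp dims(5) oU])
  obtain DS where DS: "mat_has_deriv (\<lambda>s. cmat (S s)) DS \<tau>"
    using mat_has_deriv_cmat[OF dims(3) deriv(4)] by blast
  have cD: "dA \<tau> \<in> carrier_mat n m" "dU \<tau> \<in> carrier_mat n t" "dV \<tau> \<in> carrier_mat m t"
     "DS \<in> carrier_mat t t"
    by (rule mat_has_deriv_carrier[OF deriv(1) dims(1)], rule mat_has_deriv_carrier[OF deriv(2) dims(2)],
        rule mat_has_deriv_carrier[OF deriv(3) dims(4)], rule mat_has_deriv_carrier[OF DS cSc])
  have d1: "dA \<tau> * V \<tau> + A \<tau> * dV \<tau> = dU \<tau> * cmat (S \<tau>) + U \<tau> * DS"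
  proof -
    have e: "(\<lambda>s. A s * V s) = (\<lambda>s. U s * cmat (S s))" using F1 by auto
    show ?thesis
      using mat_has_deriv_mult[OF dims(1) dims(4) deriv(1) deriv(3)]
        mat_has_deriv_mult[OF dims(2) cSc deriv(2) DS] unfolding e
      by (rule mat_has_deriv_unique)
  qed
  have d2: "mat_adjoint (dA \<tau>) * U \<tau> + mat_adjoint (A \<tau>) * dU \<tau> = dV \<tau> * cmat (S \<tau>) + V \<tau> * DS"
  proof -
    have e: "(\<lambda>s. mat_adjoint (A s) * U s) = (\<lambda>s. V s * cmat (S s))" using F2 by auto
    have cA: "\<And>s. mat_adjoint (A s) \<in> carrier_mat m n" using dims(1) by auto
    show ?thesis
      using mat_has_deriv_mult[OF cA dims(2) mat_has_deriv_adj[OF deriv(1) dims(1)] deriv(2)]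
        mat_has_deriv_mult[OF dims(4) cSc deriv(3) DS] unfolding e
      by (rule mat_has_deriv_unique)
  qed
  have inv: "cmat (S \<tau>) * the (mat_inverse (cmat (S \<tau>))) = 1\<^sub>m t"
    "the (mat_inverse (cmat (S \<tau>))) \<in> carrier_mat t t"
    using cmat_inv[OF dims(3) _ pos] svd(2) unfolding nonneg_diag_def by auto
  have ca: "mat_adjoint (U \<tau>) * U \<tau> = 1\<^sub>m t" "mat_adjoint (V \<tau>) * V \<tau> = 1\<^sub>m t"
    using oU oV by auto
  show ?thesis
    using algebra_core[OF dims(1) cD(1) dims(2) cD(2) dims(4) cD(3) cSc cD(4) inv(2) ca F1 F2 d1 d2 inv(1) adjSc]
    unfolding Let_def by assumption
qed

end
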